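(* Let $(X,\Pi)$ be a finite strictly quasiconvex quasisupermodular aggregative game. If $x^*$ is a fESS, then $x^*=\max X$ or $x^*=\min X$.
   Context: An aggregative game $(X,\Pi)$ consists of: a totally ordered action set $X$ (finite here) and a totally ordered set $Z$; a symmetric aggregator $a:X\times X\to Z$ ($a(x,y)=a(y,x)$) that is monotone increasing (if $x''\ge x'$, $y''\ge y'$ and $(x'',y'')\neq(x',y')$ then $a(x'',y'')>a(x',y')$); and $\Pi:X\times Z\to\mathbb{R}$, with underlying game payoff $\pi(x,y)=\Pi(x,a(x,y))$. Quasisupermodular: for all $z''>z'$ and $x''>x'$, $\Pi(x'',z')-\Pi(x',z')\ge0\Rightarrow\Pi(x'',z'')-\Pi(x',z'')\ge0$ and $\Pi(x'',z')-\Pi(x',z')>0\Rightarrow\Pi(x'',z'')-\Pi(x',z'')>0$. Strictly quasiconvex: for all $x<x'<x''$ in $X$ and $z\in Z$, $\Pi(x',z)<\max\{\Pi(x,z),\Pi(x'',z)\}$. fESS: $x^*$ with $\Pi(x^*,a(x^*,x))\ge\Pi(x,a(x^*,x))$ for all $x\in X$. *)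

theory Defs
  imports Complex_Main
begin

text \<open>Action set X: a finite subset of a linearly ordered type 'x.
  Aggregate set Z: the linearly ordered type 'z.\<close>

definition symmetric_aggr :: "'x set \<Rightarrow> ('x \<Rightarrow> 'x \<Rightarrow> 'z) \<Rightarrow> bool" where
  "symmetric_aggr X a \<longleftrightarrow> (\<forall>x\<in>X. \<forall>y\<in>X. a x y = a y x)"

definition monotone_increasing_aggr ::
  "('x::linorder) set \<Rightarrow> ('x \<Rightarrow> 'x \<Rightarrow> 'z::linorder) \<Rightarrow> bool" where
  "monotone_increasing_aggr X a \<longleftrightarrow>
     (\<forall>x'\<in>X. \<forall>x''\<in>X. \<forall>y'\<in>X. \<forall>y''\<in>X.
        x'' \<ge> x' \<and> y'' \<ge> y' \<and> (x'', y'') \<noteq> (x', y') \<longrightarrow> a x'' y'' > a x' y')"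

definition aggregator :: "('x::linorder) set \<Rightarrow> ('x \<Rightarrow> 'x \<Rightarrow> 'z::linorder) \<Rightarrow> bool" where
  "aggregator X a \<longleftrightarrow> symmetric_aggr X a \<and> monotone_increasing_aggr X a"

definition quasisupermodular ::
  "('x::linorder) set \<Rightarrow> ('x \<Rightarrow> 'z::linorder \<Rightarrow> real) \<Rightarrow> bool" where
  "quasisupermodular X Pi \<longleftrightarrow>
     (\<forall>z' z''. \<forall>x'\<in>X. \<forall>x''\<in>X. z'' > z' \<and> x'' > x' \<longrightarrow>
        (Pi x'' z' - Pi x' z' \<ge> 0 \<longrightarrow> Pi x'' z'' - Pi x' z'' \<ge> 0) \<and>
        (Pi x'' z' - Pi x' z' > 0 \<longrightarrow> Pi x'' z'' - Pi x' z'' > 0))"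

definition strictly_quasiconvex ::
  "('x::linorder) set \<Rightarrow> ('x \<Rightarrow> 'z \<Rightarrow> real) \<Rightarrow> bool" where
  "strictly_quasiconvex X Pi \<longleftrightarrow>
     (\<forall>x\<in>X. \<forall>x'\<in>X. \<forall>x''\<in>X. \<forall>z. x < x' \<and> x' < x'' \<longrightarrow>
        Pi x' z < max (Pi x z) (Pi x'' z))"

definition fESS :: "'x set \<Rightarrow> ('x \<Rightarrow> 'x \<Rightarrow> 'z) \<Rightarrow> ('x \<Rightarrow> 'z \<Rightarrow> real) \<Rightarrow> 'x \<Rightarrow> bool" where
  "fESS X a Pi xs \<longleftrightarrow> xs \<in> X \<and> (\<forall>x\<in>X. Pi xs (a xs x) \<ge> Pi x (a xs x))"

end

theory Submission
  imports Defs
begin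

theorem lemma7:
  fixes X :: "('x::linorder) set"
    and a :: "'x \<Rightarrow> 'x \<Rightarrow> 'z::linorder"
    and Pi :: "'x \<Rightarrow> 'z \<Rightarrow> real"
    and xs :: 'x
  assumes "finite X" and "X \<noteq> {}"
    and "aggregator X a"
    and "quasisupermodular X Pi"
    and "strictly_quasiconvex X Pi"
    and "fESS X a Pi xs"
  shows "xs = Max X \<or> xs = Min X"
proof (rule ccontr)
  assume H: "\<not> (xs = Max X \<or> xs = Min X)"
  define m where "m = Min X"
  define M where "M = Max X"
  have xsX: "xs \<in> X" using assms(6) unfolding fESS_def by blast
  have mX: "m \<in> X" and MX: "M \<in> X" using assms(1,2) m_def M_def by auto
  have "m \<le> xs" "xs \<le> M" using assms(1) xsX m_def M_def by auto
  hence lt: "m < xs" "xs < M" using H m_def M_def by auto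
  have mono: "monotone_increasing_aggr X a" using assms(3) unfolding aggregator_def by blast
  have z1: "a xs m < a xs xs"
    using mono xsX mX lt unfolding monotone_increasing_aggr_def by fastforce
  have z2: "a xs xs < a xs M"
    using mono xsX MX lt unfolding monotone_increasing_aggr_def by fastforce
  have e1: "Pi xs (a xs m) \<ge> Pi m (a xs m)" and e2: "Pi xs (a xs M) \<ge> Pi M (a xs M)"
    using assms(6) mX MX unfolding fESS_def by auto
  have q1: "Pi xs (a xs xs) \<ge> Pi m (a xs xs)"
    using assms(4) z1 lt e1 mX xsX unfolding quasisupermodular_def
    by (metis diff_ge_0_iff_ge)
  have q2: "Pi xs (a xs xs) \<ge> Pi M (a xs xs)"
  proof (rule ccontr)
    assume "\<not> ?thesis"
    hence "Pi M (a xs xs) - Pi xs (a xs xs) > 0" by simp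
    hence "Pi M (a xs M) - Pi xs (a xs M) > 0"
      using assms(4) z2 lt MX xsX unfolding quasisupermodular_def by blast
    thus False using e2 by simp
  qed
  have "Pi xs (a xs xs) < max (Pi m (a xs xs)) (Pi M (a xs xs))"
    using assms(5) mX xsX MX lt unfolding strictly_quasiconvex_def by blast
  thus False using q1 q2 by simp
qed

end
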